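(* There exist absolute constants $C,C'>0$ such that the following holds. Let $\mathbf{Y},\mathbf{Z}$ be two real random variables whose supports are contained in $[-L,L]$ for some $L\ge1$, and suppose their Wasserstein distance is $W_1(\mathbf{Y},\mathbf{Z})=c>0$. Then for every integer $k\ge\lceil 2LC/c\rceil$, \[ \mathrm{Mom}_k(\mathbf{Y},\mathbf{Z})\ge\frac{c}{2C'\cdot3^k}. \]
   Context: $W_1(\mathbf{Y},\mathbf{Z})=\inf\mathbf{E}[|\mathbf{Y}'-\mathbf{Z}'|]$ over all couplings $(\mathbf{Y}',\mathbf{Z}')$ of $\mathbf{Y}$ and $\mathbf{Z}$. $\mathrm{Mom}_k(\mathbf{Y},\mathbf{Z})=\big(\sum_{i=1}^k(\mathbf{E}[\mathbf{Y}^i]-\mathbf{E}[\mathbf{Z}^i])^2\big)^{1/2}$. *)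

theory Defs
  imports "HOL-Probability.Probability"
begin

definition couplings :: "real measure \<Rightarrow> real measure \<Rightarrow> (real \<times> real) measure set" where
  "couplings \<mu> \<nu> = {\<pi>. prob_space \<pi> \<and> sets \<pi> = sets (borel \<Otimes>\<^sub>M borel)
      \<and> distr \<pi> borel fst = \<mu> \<and> distr \<pi> borel snd = \<nu>}"

text \<open>Wasserstein-1 distance (valued in ennreal, so no integrability side conditions).\<close>
definition W1 :: "real measure \<Rightarrow> real measure \<Rightarrow> ennreal" where
  "W1 \<mu> \<nu> = (INF \<pi>\<in>couplings \<mu> \<nu>. \<integral>\<^sup>+ p. ennreal \<bar>fst p - snd p\<bar> \<partial>\<pi>)"

definition Mom :: "nat \<Rightarrow> real measure \<Rightarrow> real measure \<Rightarrow> real" where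
  "Mom k \<mu> \<nu> = sqrt (\<Sum>i=1..k. ((\<integral>x. x ^ i \<partial>\<mu>) - (\<integral>x. x ^ i \<partial>\<nu>))\<^sup>2)"

end

theory Submission
  imports Defs "HOL-Computational_Algebra.Polynomial"
begin


lemma cdf_low:
  assumes M: "real_distribution M" and ae: "AE x in M. x \<in> {-L..L}" and x: "x < -L"
  shows "cdf M x = 0"
proof -
  interpret real_distribution M by fact
  have sp: "space M = UNIV" using sets_eq_imp_space_eq[OF events_eq_borel] by simp
  have "cdf M x = \<P>(y in M. y \<le> x)" unfolding cdf_def using sp by (auto intro!: arg_cong[where f="measure M"])
  also have "\<dots> = 0"
    by (rule prob_eq_0_AE, rule eventually_mono[OF ae]) (use x in auto)
  finally show ?thesis .
qed

lemma cdf_high: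
  assumes M: "real_distribution M" and ae: "AE x in M. x \<in> {-L..L}" and x: "L \<le> x"
  shows "cdf M x = 1"
proof -
  interpret real_distribution M by fact
  have sp: "space M = UNIV" using sets_eq_imp_space_eq[OF events_eq_borel] by simp
  have "cdf M x = \<P>(y in M. y \<le> x)" unfolding cdf_def using sp by (auto intro!: arg_cong[where f="measure M"])
  also have "\<dots> = 1"
    by (subst prob_Collect_eq_1) (auto simp: sp intro!: eventually_mono[OF ae] intro: order_trans[OF _ x])
  finally show ?thesis .
qed

lemma W1_bound:
  assumes \<mu>: "real_distribution \<mu>" and \<nu>: "real_distribution \<nu>" and L: "0 \<le> L"
    and ae\<mu>: "AE x in \<mu>. x \<in> {-L..L}" and ae\<nu>: "AE x in \<nu>. x \<in> {-L..L}"
  shows "\<exists>G. (\<forall>a b. \<bar>G a - G b\<bar> \<le> \<bar>a - b\<bar>) \<and> W1 \<mu> \<nu> \<le> ennreal ((\<integral>x. G x \<partial>\<mu>) - (\<integral>x. G x \<partial>\<nu>))"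
proof -
  interpret M1: cdf_distribution \<mu> unfolding cdf_distribution_def by (rule \<mu>)
  interpret M2: cdf_distribution \<nu> unfolding cdf_distribution_def by (rule \<nu>)
  define f where "f t = indicator {-L..L} t * sgn (cdf \<nu> t - cdf \<mu> t)" for t :: real
  have fm[measurable]: "f \<in> borel_measurable borel" unfolding f_def by measurable
  have fb: "\<bar>f t\<bar> \<le> indicator {-L..L} t" for t
    by (auto simp: f_def indicator_def abs_sgn_eq)
  have iI: "integrable lborel (indicator {-L..L} :: real \<Rightarrow> real)"
    using borel_integrable_compact[of "{-L..L}" "\<lambda>_. 1::real"] by (simp add: indicator_def[abs_def])
  have intS: "integrable lborel (\<lambda>t. indicator S t * f t)" if [measurable]: "S \<in> sets borel" for S
    by (rule Bochner_Integration.integrable_bound[OF iI])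
       (auto intro!: AE_I2 simp: indicator_def f_def abs_sgn_eq)
  define G where "G x = (\<integral>t. indicator {..<x} t * f t \<partial>lborel)" for x
  have Gdiff: "G b - G a = (\<integral>t. indicator {a..<b} t * f t \<partial>lborel)" if "a \<le> b" for a b
  proof -
    have "G b - G a = (\<integral>t. indicator {..<b} t * f t - indicator {..<a} t * f t \<partial>lborel)"
      unfolding G_def by (rule Bochner_Integration.integral_diff[symmetric]) (auto intro!: intS)
    also have "\<dots> = (\<integral>t. indicator {a..<b} t * f t \<partial>lborel)"
      using that by (intro Bochner_Integration.integral_cong) (auto simp: indicator_def)
    finally show ?thesis .
  qed
  have Glip0: "\<bar>G b - G a\<bar> \<le> b - a" if "a \<le> b" for a b
  proof -
    have "\<bar>G b - G a\<bar> \<le> (\<integral>t. indicator {a..<b} t \<partial>lborel)"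
      unfolding Gdiff[OF that]
    proof (rule integral_abs_bound_integral[OF intS])
      show "integrable lborel (indicator {a..<b} :: real \<Rightarrow> real)"
        using that by (intro integrable_real_indicator) auto
    qed (auto simp: indicator_def f_def abs_sgn_eq)
    also have "\<dots> = b - a" using that by simp
    finally show ?thesis .
  qed
  have Glip: "\<bar>G a - G b\<bar> \<le> \<bar>a - b\<bar>" for a b
    using Glip0[of a b] Glip0[of b a] by (cases "a \<le> b") (auto simp: abs_minus_commute)
  have Gpos: "G b - G a = b - a" if "a \<le> b" "\<And>t. t \<in> {a..<b} \<Longrightarrow> f t = 1" for a b
  proof -
    have "G b - G a = (\<integral>t. indicator {a..<b} t \<partial>lborel)"
      unfolding Gdiff[OF that(1)] using that(2)
      by (intro Bochner_Integration.integral_cong) (auto simp: indicator_def)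
    also have "\<dots> = b - a" using that by simp
    finally show ?thesis .
  qed
  have Gneg: "G b - G a = a - b" if "a \<le> b" "\<And>t. t \<in> {a..<b} \<Longrightarrow> f t = -1" for a b
  proof -
    have "G b - G a = (\<integral>t. - indicator {a..<b} t \<partial>lborel)"
      unfolding Gdiff[OF that(1)] using that(2)
      by (intro Bochner_Integration.integral_cong) (auto simp: indicator_def)
    also have "\<dots> = a - b" using that by simp
    finally show ?thesis .
  qed
  have Gcont: "continuous_on UNIV G"
    by (rule lipschitz_on_continuous_on[where L=1]) (auto simp: lipschitz_on_def dist_real_def Glip)
  have Gm[measurable]: "G \<in> borel_measurable borel"
    using Gcont by (rule borel_measurable_continuous_onI)
  let ?\<Omega> = "restrict_space lborel {0<..<1} :: real measure"
  have "prob_space ?\<Omega>"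
    by (auto simp: space_restrict_space emeasure_restrict_space intro!: prob_spaceI)
  interpret \<Omega>: prob_space ?\<Omega> by fact
  have sets\<Omega>: "sets ?\<Omega> = sets (restrict_space borel {0<..<1})"
    by (rule sets_restrict_space_cong) simp
  have I1m[measurable]: "M1.I \<in> borel_measurable ?\<Omega>"
    using M1.measurable_CI by (simp add: measurable_cong_sets[OF sets\<Omega> refl])
  have I2m[measurable]: "M2.I \<in> borel_measurable ?\<Omega>"
    using M2.measurable_CI by (simp add: measurable_cong_sets[OF sets\<Omega> refl])
  have sp\<Omega>: "space ?\<Omega> = {0<..<1}" by (simp add: space_restrict_space)
  have range1: "M1.I \<omega> \<in> {-L..L}" if "\<omega> \<in> {0<..<1}" for \<omega>
  proof -
    have a: "\<omega> \<le> cdf \<mu> x \<longleftrightarrow> M1.I \<omega> \<le> x" for x by (rule M1.pseudoinverse) (use that in auto)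
    have "M1.I \<omega> \<le> L" using a[of L] cdf_high[OF \<mu> ae\<mu>, of L] that by auto
    moreover have "-L \<le> M1.I \<omega>"
    proof (rule ccontr)
      assume "\<not> -L \<le> M1.I \<omega>"
      then have "cdf \<mu> (M1.I \<omega>) = 0" by (intro cdf_low[OF \<mu> ae\<mu>]) auto
      with a[of "M1.I \<omega>"] that show False by auto
    qed
    ultimately show ?thesis by auto
  qed
  have range2: "M2.I \<omega> \<in> {-L..L}" if "\<omega> \<in> {0<..<1}" for \<omega>
  proof -
    have a: "\<omega> \<le> cdf \<nu> x \<longleftrightarrow> M2.I \<omega> \<le> x" for x by (rule M2.pseudoinverse) (use that in auto)
    have "M2.I \<omega> \<le> L" using a[of L] cdf_high[OF \<nu> ae\<nu>, of L] that by auto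
    moreover have "-L \<le> M2.I \<omega>"
    proof (rule ccontr)
      assume "\<not> -L \<le> M2.I \<omega>"
      then have "cdf \<nu> (M2.I \<omega>) = 0" by (intro cdf_low[OF \<nu> ae\<nu>]) auto
      with a[of "M2.I \<omega>"] that show False by auto
    qed
    ultimately show ?thesis by auto
  qed
  have key: "\<bar>M1.I \<omega> - M2.I \<omega>\<bar> = G (M1.I \<omega>) - G (M2.I \<omega>)" if \<omega>: "\<omega> \<in> {0<..<1}" for \<omega>
  proof -
    have a1: "\<omega> \<le> cdf \<mu> x \<longleftrightarrow> M1.I \<omega> \<le> x" for x by (rule M1.pseudoinverse) (use \<omega> in auto)
    have a2: "\<omega> \<le> cdf \<nu> x \<longleftrightarrow> M2.I \<omega> \<le> x" for x by (rule M2.pseudoinverse) (use \<omega> in auto)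
    show ?thesis
    proof (cases "M2.I \<omega> \<le> M1.I \<omega>")
      case True
      have "G (M1.I \<omega>) - G (M2.I \<omega>) = M1.I \<omega> - M2.I \<omega>"
      proof (rule Gpos[OF True])
        fix t assume t: "t \<in> {M2.I \<omega>..<M1.I \<omega>}"
        then have "\<omega> \<le> cdf \<nu> t" "\<not> \<omega> \<le> cdf \<mu> t" using a1[of t] a2[of t] by auto
        moreover have "t \<in> {-L..L}" using t range1[OF \<omega>] range2[OF \<omega>] by auto
        ultimately show "f t = 1" by (auto simp: f_def)
      qed
      then show ?thesis using True by simp
    next
      case False
      have "G (M2.I \<omega>) - G (M1.I \<omega>) = M1.I \<omega> - M2.I \<omega>"
      proof (rule Gneg)
        show "M1.I \<omega> \<le> M2.I \<omega>" using False by simp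
        fix t assume t: "t \<in> {M1.I \<omega>..<M2.I \<omega>}"
        then have "\<omega> \<le> cdf \<mu> t" "\<not> \<omega> \<le> cdf \<nu> t" using a1[of t] a2[of t] by auto
        moreover have "t \<in> {-L..L}" using t range1[OF \<omega>] range2[OF \<omega>] by auto
        ultimately show "f t = -1" by (auto simp: f_def)
      qed
      then show ?thesis using False by simp
    qed
  qed
  have b: "\<bar>G x\<bar> \<le> \<bar>G 0\<bar> + L" if "x \<in> {-L..L}" for x
    using Glip[of x 0] that by auto
  have i1: "integrable ?\<Omega> (\<lambda>\<omega>. G (M1.I \<omega>))"
    by (rule \<Omega>.integrable_const_bound[where B="\<bar>G 0\<bar> + L"]) (auto simp: sp\<Omega> intro!: AE_I2 b range1)
  have i2: "integrable ?\<Omega> (\<lambda>\<omega>. G (M2.I \<omega>))"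
    by (rule \<Omega>.integrable_const_bound[where B="\<bar>G 0\<bar> + L"]) (auto simp: sp\<Omega> intro!: AE_I2 b range2)
  define \<pi> where "\<pi> = distr ?\<Omega> (borel \<Otimes>\<^sub>M borel) (\<lambda>\<omega>. (M1.I \<omega>, M2.I \<omega>))"
  have pm[measurable]: "(\<lambda>\<omega>. (M1.I \<omega>, M2.I \<omega>)) \<in> measurable ?\<Omega> (borel \<Otimes>\<^sub>M borel)"
    by measurable
  have "\<pi> \<in> couplings \<mu> \<nu>"
  proof -
    have "prob_space \<pi>" unfolding \<pi>_def by (rule \<Omega>.prob_space_distr[OF pm])
    moreover have "distr \<pi> borel fst = \<mu>"
      unfolding \<pi>_def by (subst distr_distr) (auto simp: comp_def M1.distr_I_eq_M)
    moreover have "distr \<pi> borel snd = \<nu>"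
      unfolding \<pi>_def by (subst distr_distr) (auto simp: comp_def M2.distr_I_eq_M)
    ultimately show ?thesis unfolding couplings_def \<pi>_def by auto
  qed
  then have "W1 \<mu> \<nu> \<le> (\<integral>\<^sup>+ p. ennreal \<bar>fst p - snd p\<bar> \<partial>\<pi>)"
    unfolding W1_def by (rule INF_lower)
  also have "\<dots> = (\<integral>\<^sup>+ \<omega>. ennreal \<bar>M1.I \<omega> - M2.I \<omega>\<bar> \<partial>?\<Omega>)"
    unfolding \<pi>_def by (subst nn_integral_distr) auto
  also have "\<dots> = (\<integral>\<^sup>+ \<omega>. ennreal (G (M1.I \<omega>) - G (M2.I \<omega>)) \<partial>?\<Omega>)"
    by (intro nn_integral_cong) (simp add: sp\<Omega> key)
  also have "\<dots> = ennreal (\<integral>\<omega>. G (M1.I \<omega>) - G (M2.I \<omega>) \<partial>?\<Omega>)"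
  proof (rule nn_integral_eq_integral)
    show "integrable ?\<Omega> (\<lambda>\<omega>. G (M1.I \<omega>) - G (M2.I \<omega>))"
      by (rule Bochner_Integration.integrable_diff[OF i1 i2])
    show "AE \<omega> in ?\<Omega>. 0 \<le> G (M1.I \<omega>) - G (M2.I \<omega>)"
      by (rule AE_I2) (metis sp\<Omega> key abs_ge_zero)
  qed
  also have "(\<integral>\<omega>. G (M1.I \<omega>) - G (M2.I \<omega>) \<partial>?\<Omega>) = (\<integral>x. G x \<partial>\<mu>) - (\<integral>x. G x \<partial>\<nu>)"
  proof -
    have "(\<integral>x. G x \<partial>\<mu>) = (\<integral>\<omega>. G (M1.I \<omega>) \<partial>?\<Omega>)"
      by (subst M1.distr_I_eq_M[symmetric], subst integral_distr) auto
    moreover have "(\<integral>x. G x \<partial>\<nu>) = (\<integral>\<omega>. G (M2.I \<omega>) \<partial>?\<Omega>)"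
      by (subst M2.distr_I_eq_M[symmetric], subst integral_distr) auto
    ultimately show ?thesis using i1 i2 by simp
  qed
  finally show ?thesis using Glip by blast
qed



fun U :: "nat \<Rightarrow> real poly" where
  "U 0 = 1"
| "U (Suc 0) = [:3, 0, -4:]"
| "U (Suc (Suc r)) = [:2, 0, -4:] * U (Suc r) - U r"

fun V :: "nat \<Rightarrow> real poly" where
  "V 0 = 1"
| "V (Suc 0) = [:3, 0, 4:]"
| "V (Suc (Suc r)) = [:2, 0, 4:] * V (Suc r) + V r"

definition maj :: "real poly \<Rightarrow> real poly \<Rightarrow> bool" where
  "maj p q \<longleftrightarrow> (\<forall>i. \<bar>coeff p i\<bar> \<le> coeff q i)"

lemma maj_add: "maj p q \<Longrightarrow> maj p' q' \<Longrightarrow> maj (p + p') (q + q')"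
  unfolding maj_def by (auto intro: abs_triangle_ineq[THEN order_trans] add_mono)

lemma maj_diff: "maj p q \<Longrightarrow> maj p' q' \<Longrightarrow> maj (p - p') (q + q')"
  unfolding maj_def by (auto intro: abs_triangle_ineq4[THEN order_trans] add_mono)

lemma maj_mult: assumes "maj p q" "maj p' q'" shows "maj (p * p') (q * q')"
  unfolding maj_def
proof
  fix n
  have "\<bar>coeff (p * p') n\<bar> \<le> (\<Sum>i\<le>n. \<bar>coeff p i * coeff p' (n - i)\<bar>)"
    unfolding coeff_mult by (rule sum_abs)
  also have "\<dots> \<le> (\<Sum>i\<le>n. coeff q i * coeff q' (n - i))"
    using assms unfolding maj_def
    by (intro sum_mono) (auto simp: abs_mult intro!: mult_mono order_trans[OF abs_ge_zero])
  finally show "\<bar>coeff (p * p') n\<bar> \<le> coeff (q * q') n" unfolding coeff_mult .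
qed

lemma maj_pow: assumes "maj p q" shows "maj (p ^ n) (q ^ n)"
proof (induction n)
  case 0 show ?case by (simp add: maj_def)
next
  case (Suc n) show ?case unfolding power_Suc by (rule maj_mult[OF assms Suc])
qed

lemma maj_nonneg: "maj p q \<Longrightarrow> 0 \<le> coeff q i"
  unfolding maj_def by (meson abs_ge_zero order_trans)

lemma maj_UV: "maj (U r) (V r)"
proof (induction r rule: U.induct)
  case 1 then show ?case by (simp add: maj_def)
next
  case 2 then show ?case by (auto simp: maj_def coeff_pCons split: nat.split)
next
  case (3 r)
  have "maj [:2, 0, -4:] [:2, 0, 4:]" by (auto simp: maj_def coeff_pCons split: nat.split)
  then show ?case using 3 by (simp only: U.simps V.simps) (blast intro: maj_diff maj_mult)
qed

lemma V_bound: "0 \<le> poly (V r) 1 \<and> poly (V r) 1 \<le> 7 * 9 ^ r"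
proof (induction r rule: V.induct)
  case (3 r)
  then show ?case by (auto simp: algebra_simps)
qed auto

lemma degree_U: "degree (U r) \<le> 2 * r"
proof (induction r rule: U.induct)
  case (3 r)
  have "degree ([:2, 0, -4:] * U (Suc r)) \<le> 2 + 2 * Suc r"
    by (rule order_trans[OF degree_mult_le]) (use 3 in auto)
  moreover have "degree (U r) \<le> 2 * Suc (Suc r)" using 3 by auto
  ultimately show ?case by (auto intro: order_trans[OF degree_diff_le])
qed (auto simp: degree_pCons_eq_if)

lemma sum_coeff_maj:
  assumes "maj p q" shows "(\<Sum>i\<le>D. \<bar>coeff p i\<bar>) \<le> poly q 1"
proof -
  have "(\<Sum>i\<le>D. \<bar>coeff p i\<bar>) \<le> (\<Sum>i\<le>D. coeff q i)"
    using assms unfolding maj_def by (intro sum_mono) auto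
  also have "\<dots> \<le> (\<Sum>i\<le>max D (degree q). coeff q i)"
    by (intro sum_mono2) (auto intro: maj_nonneg[OF assms])
  also have "\<dots> = (\<Sum>i\<le>degree q. coeff q i)"
    by (intro sum.mono_neutral_right) (auto simp: coeff_eq_0)
  also have "\<dots> = poly q 1" by (simp add: poly_altdef)
  finally show ?thesis .
qed

lemma U_sin: "poly (U r) (sin x) * sin x = sin (real (2 * r + 1) * x)"
proof (induction r rule: U.induct)
  case 1 then show ?case by simp
next
  case 2
  have c2: "cos x * cos x = 1 - sin x * sin x" using sin_cos_squared_add[of x] by (simp add: power2_eq_square)
  have "sin (3 * x) = sin (2 * x + x)" by simp
  also have "\<dots> = 2 * sin x * (cos x * cos x) + (1 - 2 * sin x ^ 2) * sin x"
    unfolding sin_add sin_double cos_double_sin by (simp add: algebra_simps)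
  also have "\<dots> = 2 * sin x * (1 - sin x * sin x) + (1 - 2 * sin x ^ 2) * sin x" unfolding c2 ..
  also have "\<dots> = (3 - 4 * sin x ^ 2) * sin x" by (simp add: algebra_simps power2_eq_square)
  finally show ?case by (simp add: algebra_simps power2_eq_square)
next
  case (3 r)
  define A where "A = real (2 * Suc r + 1) * x"
  have e1: "real (2 * Suc (Suc r) + 1) * x = A + 2 * x" unfolding A_def by (simp add: algebra_simps)
  have e2: "real (2 * r + 1) * x = A - 2 * x" unfolding A_def by (simp add: algebra_simps)
  have "sin (A + 2 * x) = 2 * cos (2 * x) * sin A - sin (A - 2 * x)"
    unfolding sin_add sin_diff by (simp add: algebra_simps)
  also have "cos (2 * x) = 1 - 2 * sin x ^ 2" by (rule cos_double_sin)
  finally have "sin (A + 2 * x) = (2 - 4 * sin x ^ 2) * sin A - sin (A - 2 * x)"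
    by (simp add: algebra_simps)
  moreover have IH1: "poly (U (Suc r)) (sin x) * sin x = sin A" using 3 unfolding A_def by simp
  moreover have IH0: "poly (U r) (sin x) * sin x = sin (A - 2 * x)" using 3 unfolding e2 by simp
  moreover have "poly (U (Suc (Suc r))) (sin x) * sin x
      = (2 - 4 * sin x ^ 2) * (poly (U (Suc r)) (sin x) * sin x) - poly (U r) (sin x) * sin x"
    by (simp add: algebra_simps power2_eq_square)
  ultimately show ?case unfolding e1 by simp
qed

lemma U_zero: "poly (U r) 0 = real (2 * r + 1)"
  by (induction r rule: U.induct) auto

lemma abs_sin_mult_le: "\<bar>sin (real n * x)\<bar> \<le> real n * \<bar>sin x\<bar>"
proof (induction n)
  case (Suc n)
  have "real (Suc n) * x = real n * x + x" by (simp add: algebra_simps)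
  then have "sin (real (Suc n) * x) = sin (real n * x) * cos x + cos (real n * x) * sin x"
    by (simp only: sin_add)
  also have "\<bar>\<dots>\<bar> \<le> \<bar>sin (real n * x)\<bar> * \<bar>cos x\<bar> + \<bar>cos (real n * x)\<bar> * \<bar>sin x\<bar>"
    by (metis abs_mult abs_triangle_ineq)
  also have "\<dots> \<le> \<bar>sin (real n * x)\<bar> + \<bar>sin x\<bar>"
    by (intro add_mono mult_left_le mult_left_le_one_le) (auto simp: abs_cos_le_one)
  finally show ?case using Suc by (simp add: algebra_simps)
qed simp

lemma sin_dirichlet_lower:
  assumes "0 \<le> x" "real (2 * r + 1) * x \<le> pi / 3"
  shows "real (r + 1) * sin x \<le> sin (real (2 * r + 1) * x)"
  using assms
proof (induction r)
  case 0 then show ?case by simp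
next
  case (Suc r)
  define A where "A = real (2 * r + 1) * x"
  have e1: "real (2 * Suc r + 1) * x = A + 2 * x" unfolding A_def by (simp add: algebra_simps)
  have "sin (A + 2 * x) = sin A + 2 * cos (A + x) * sin x"
  proof -
    have h1: "sin ((A + x) + x) = sin (A + x) * cos x + cos (A + x) * sin x" by (rule sin_add)
    have h2: "sin ((A + x) - x) = sin (A + x) * cos x - cos (A + x) * sin x" by (rule sin_diff)
    have "sin (A + 2 * x) = sin ((A + x) + x)" by (simp add: algebra_simps)
    moreover have "sin A = sin ((A + x) - x)" by simp
    ultimately show ?thesis using h1 h2 by linarith
  qed
  moreover have "1 / 2 \<le> cos (A + x)"
  proof -
    have "cos (pi / 3) \<le> cos (A + x)"
      using Suc.prems pi_ge_two unfolding A_def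
      by (intro cos_monotone_0_pi_le) (auto simp: algebra_simps)
    then show ?thesis by (simp add: cos_60)
  qed
  moreover have "0 \<le> sin x"
  proof (rule sin_ge_zero)
    show "0 \<le> x" by fact
    have "x \<le> real (2 * Suc r + 1) * x" using Suc.prems by (simp add: algebra_simps)
    then show "x \<le> pi" using Suc.prems pi_ge_zero by linarith
  qed
  moreover have "real (r + 1) * sin x \<le> sin A"
    unfolding A_def using Suc.prems by (intro Suc.IH) (auto simp: algebra_simps)
  ultimately show ?case unfolding e1
  proof -
    assume h: "sin (A + 2 * x) = sin A + 2 * cos (A + x) * sin x" "1 / 2 \<le> cos (A + x)"
      "0 \<le> sin x" "real (r + 1) * sin x \<le> sin A"
    have "(1/2) * sin x \<le> cos (A + x) * sin x" using h(2,3) by (rule mult_right_mono)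
    moreover have "real (Suc r + 1) * sin x = real (r + 1) * sin x + sin x" by (simp add: algebra_simps)
    ultimately show "real (Suc r + 1) * sin x \<le> sin (A + 2 * x)" using h(1,4) by linarith
  qed
qed

lemma sin_ge_half: fixes y :: real assumes "0 \<le> y" "y \<le> 2/3" shows "y / 2 \<le> sin y"
proof (cases "y = 0")
  case False
  then have "0 < y" using assms by simp
  from MVT2[OF this, of sin cos] obtain z where z: "0 < z" "z < y" "sin y - sin 0 = (y - 0) * cos z"
    by (auto intro: DERIV_sin)
  have "cos (pi / 3) \<le> cos z"
    using z assms pi_ge_two by (intro cos_monotone_0_pi_le) auto
  then have "1/2 \<le> cos z" by (simp add: cos_60)
  then show ?thesis using z \<open>0 < y\<close> by (simp add: mult_left_mono[of "1/2" "cos z" y])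
qed simp

lemma U_abs_le: assumes "\<bar>s\<bar> \<le> 1" shows "\<bar>poly (U r) s\<bar> \<le> real (2 * r + 1)"
proof (cases "s = 0")
  case True then show ?thesis by (simp add: U_zero)
next
  case False
  define x where "x = arcsin s"
  have sx: "sin x = s" unfolding x_def using assms by simp
  have "\<bar>poly (U r) s\<bar> * \<bar>s\<bar> \<le> real (2 * r + 1) * \<bar>s\<bar>"
    using U_sin[of r x] abs_sin_mult_le[of "2 * r + 1" x] unfolding sx by (simp add: abs_mult)
  then show ?thesis by (rule mult_right_le_imp_le) (use False in simp)
qed

lemma U_abs_le2: assumes "\<bar>s\<bar> \<le> 1" shows "\<bar>s\<bar> * \<bar>poly (U r) s\<bar> \<le> 1"
proof -
  define x where "x = arcsin s"
  have sx: "sin x = s" unfolding x_def using assms by simp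
  have "s * poly (U r) s = sin (real (2 * r + 1) * x)" using U_sin[of r x] sx by (simp add: mult.commute)
  then have "\<bar>s * poly (U r) s\<bar> \<le> 1" by (simp only: abs_sin_le_one)
  then show ?thesis by (simp add: abs_mult)
qed

lemma U_lower: assumes "0 \<le> s" "s \<le> 1 / (4 * real (2 * r + 1))"
  shows "real (r + 1) \<le> poly (U r) s"
proof (cases "s = 0")
  case True then show ?thesis by (simp add: U_zero)
next
  case False
  then have s0: "0 < s" using assms by simp
  have s1: "s \<le> 1/4" using assms(2) by (rule order_trans) (auto simp: field_simps)
  define x where "x = arcsin s"
  have sx: "sin x = s" unfolding x_def using assms s1 by simp
  have x0: "0 \<le> x" unfolding x_def using s0 s1 arcsin_le_mono[of 0 s] by simp
  have "s \<le> sin (2 * s)" using sin_ge_half[of "2 * s"] s0 s1 by simp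
  then have "x \<le> arcsin (sin (2 * s))" unfolding x_def
    using arcsin_le_mono[of s "sin (2 * s)"] abs_sin_le_one[of "2 * s"] s0 s1 by simp
  also have "\<dots> = 2 * s" using s1 s0 pi_ge_two by (intro arcsin_sin) auto
  finally have x2: "x \<le> 2 * s" .
  have m4: "s * (4 * real (2 * r + 1)) \<le> 1" using assms(2) by (simp add: le_divide_eq)
  have "real (2 * r + 1) * x \<le> real (2 * r + 1) * (2 * s)" using x2 by (intro mult_left_mono) auto
  also have "\<dots> = (s * (4 * real (2 * r + 1))) / 2" by (simp add: algebra_simps)
  also have "\<dots> \<le> 1 / 2" using m4 by linarith
  also have "\<dots> \<le> pi / 3" using pi_ge_two by simp
  finally have ineq: "real (r + 1) * sin x \<le> sin (real (2 * r + 1) * x)"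
    by (intro sin_dirichlet_lower x0)
  have e: "poly (U r) s * s = sin (real (2 * r + 1) * x)" using U_sin[of r x] by (simp only: sx)
  have "real (r + 1) * s \<le> poly (U r) s * s" using ineq by (simp only: e sx)
  then show ?thesis by (rule mult_right_le_imp_le[OF _ s0])
qed



definition KN :: "nat \<Rightarrow> real" where
  "KN r = (\<integral>s. indicator {-1..1} s * poly (U r ^ 4) s \<partial>lborel)"

definition KA :: "nat \<Rightarrow> real" where
  "KA r = (\<integral>s. indicator {-1..1} s * (\<bar>s\<bar> * poly (U r ^ 4) s) \<partial>lborel)"

lemma int_compact_real:
  fixes f :: "real \<Rightarrow> real"
  assumes "continuous_on {a..b} f"
  shows "integrable lborel (\<lambda>s. indicator {a..b} s * f s)"
  using borel_integrable_compact[OF compact_Icc assms] by simp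

lemma KN_integrable: "integrable lborel (\<lambda>s. indicator {-1..1} s * poly (U r ^ 4) s)"
  by (rule int_compact_real) (intro continuous_intros)

lemma KA_integrable: "integrable lborel (\<lambda>s. indicator {-1..1} s * (\<bar>s\<bar> * poly (U r ^ 4) s))"
  by (rule int_compact_real) (intro continuous_intros)

lemma KN_lower: "real (2 * r + 1) ^ 3 / 64 \<le> KN r"
proof -
  define m where "m = real (2 * r + 1)"
  have m1: "1 \<le> m" unfolding m_def by simp
  define d where "d = 1 / (4 * m)"
  have d0: "0 \<le> d" "d \<le> 1" unfolding d_def using m1 by (auto simp: field_simps)
  have "(\<integral>s. indicator {0..d} s * (m / 2) ^ 4 \<partial>lborel) \<le> KN r"
    unfolding KN_def
  proof (rule integral_mono[OF _ KN_integrable])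
    show "integrable lborel (\<lambda>s. indicator {0..d} s * (m / 2) ^ 4)"
      using d0 by (intro integrable_mult_left integrable_real_indicator) auto
    fix s :: real
    show "indicator {0..d} s * (m / 2) ^ 4 \<le> indicator {-1..1} s * poly (U r ^ 4) s"
    proof (cases "s \<in> {0..d}")
      case True
      have "m / 2 \<le> real (r + 1)" unfolding m_def by simp
      also have "\<dots> \<le> poly (U r) s"
        using True unfolding d_def m_def by (intro U_lower) auto
      finally have "(m / 2) ^ 4 \<le> (poly (U r) s) ^ 4"
        by (rule power_mono) (use m1 in simp)
      then show ?thesis using True d0 by (simp add: indicator_def)
    next
      case False
      have "0 \<le> poly (U r) s ^ 4" by (rule zero_le_even_power) simp
      then show ?thesis using False by (auto simp: indicator_def)
    qed
  qed
  also have "(\<integral>s. indicator {0..d} s * (m / 2) ^ 4 \<partial>lborel) = d * (m / 2) ^ 4"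
    using d0 by simp
  also have "d * (m / 2) ^ 4 = m ^ 3 / 64" unfolding d_def using m1 by (simp add: field_simps eval_nat_numeral)
  finally show ?thesis unfolding m_def .
qed

lemma deriv_inv_sq:
  assumes "s \<noteq> 0"
  shows "((\<lambda>s::real. - 1 / (2 * s ^ 2)) has_real_derivative 1 / s ^ 3) (at s)"
  using assms by (auto intro!: derivative_eq_intros simp: field_simps eval_nat_numeral)

lemma deriv_inv_sq':
  assumes "s \<noteq> 0"
  shows "((\<lambda>s::real. 1 / (2 * s ^ 2)) has_real_derivative - 1 / s ^ 3) (at s)"
  using assms by (auto intro!: derivative_eq_intros simp: field_simps eval_nat_numeral)

lemma KA_upper: "KA r \<le> 3 * real (2 * r + 1) ^ 2"
proof -
  define m where "m = real (2 * r + 1)"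
  have m1: "1 \<le> m" unfolding m_def by simp
  define g where "g s = indicator {-1/m..1/m} s * m ^ 3 + indicator {1/m..1} s * (1 / s ^ 3)
     + indicator {-1..-1/m} s * (- 1 / s ^ 3)" for s :: real
  have c1: "continuous_on {1/m..1} (\<lambda>s::real. 1 / s ^ 3)"
    using m1 by (intro continuous_intros) (auto simp: field_simps)
  have c2: "continuous_on {-1..-1/m} (\<lambda>s::real. - 1 / s ^ 3)"
    using m1 by (intro continuous_intros) (auto simp: field_simps)
  have i1: "integrable lborel (\<lambda>s. indicator {-1/m..1/m} s * m ^ 3)"
    using m1 by (intro integrable_mult_left integrable_real_indicator) auto
  have i2: "integrable lborel (\<lambda>s. indicator {1/m..1} s * (1 / s ^ 3))"
    by (rule int_compact_real[OF c1])
  have i3: "integrable lborel (\<lambda>s. indicator {-1..-1/m} s * (- 1 / s ^ 3))"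
    by (rule int_compact_real[OF c2])
  have d1: "((\<lambda>s::real. - 1 / (2 * s^2)) has_vector_derivative 1 / x^3) (at x within {1/m..1})"
    if "1/m \<le> x" "x \<le> 1" for x
  proof -
    have "0 < 1/m" using m1 by simp
    then have "x \<noteq> 0" using that by linarith
    then show ?thesis unfolding has_real_derivative_iff_has_vector_derivative[symmetric]
      by (rule DERIV_subset[OF deriv_inv_sq]) simp
  qed
  have d2: "((\<lambda>s::real. 1 / (2 * s^2)) has_vector_derivative - 1 / x^3) (at x within {-1..-1/m})"
    if "-1 \<le> x" "x \<le> -1/m" for x
  proof -
    have "0 < 1/m" using m1 by simp
    then have "x \<noteq> 0" using that by linarith
    then show ?thesis unfolding has_real_derivative_iff_has_vector_derivative[symmetric]
      by (rule DERIV_subset[OF deriv_inv_sq']) simp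
  qed
  have "KA r \<le> (\<integral>s. g s \<partial>lborel)"
    unfolding KA_def
  proof (rule integral_mono[OF KA_integrable])
    show "integrable lborel g" unfolding g_def using i1 i2 i3 by auto
    fix s :: real
    have g0: "0 \<le> indicator {1/m..1} s * (1 / s ^ 3)"
    proof (cases "s \<in> {1/m..1}")
      case True
      then have "0 < s" using m1 by (auto intro: order.strict_trans2[rotated])
      then show ?thesis using True by (simp add: indicator_def)
    qed (auto simp: indicator_def)
    have g0': "0 \<le> indicator {-1..-1/m} s * (- 1 / s ^ 3)"
    proof (cases "s \<in> {-1..-1/m}")
      case True
      then have "s \<le> -1/m" by auto
      moreover have "-1/m < 0" using m1 by simp
      ultimately have "s < 0" by linarith
      then have "s ^ 3 < 0" by (simp add: power_less_zero_eq)
      then show ?thesis using True by (simp add: indicator_def divide_less_0_iff less_imp_le)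
    qed (auto simp: indicator_def)
    have g0'': "0 \<le> indicator {-1/m..1/m} s * m ^ 3" using m1 by (simp add: indicator_def)
    show "indicator {-1..1} s * (\<bar>s\<bar> * poly (U r ^ 4) s) \<le> g s"
    proof (cases "\<bar>s\<bar> \<le> 1")
      case False
      then have "indicator {-1..1} s = (0::real)" by (auto simp: indicator_def)
      then show ?thesis unfolding g_def using g0 g0' g0'' by simp
    next
      case True
      have P4: "poly (U r ^ 4) s = (poly (U r) s) ^ 4" by simp
      show ?thesis
      proof (cases "\<bar>s\<bar> \<le> 1 / m")
        case True2: True
        have "\<bar>poly (U r) s\<bar> ^ 4 \<le> m ^ 4"
          using U_abs_le[OF True] unfolding m_def by (intro power_mono) auto
        then have "\<bar>s\<bar> * poly (U r ^ 4) s \<le> (1 / m) * m ^ 4"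
          unfolding P4 using True2 m1 by (intro mult_mono) (auto simp: power_abs[symmetric] power_even_abs_numeral)
        also have "\<dots> = m ^ 3" using m1 by (simp add: field_simps eval_nat_numeral)
        finally have "\<bar>s\<bar> * poly (U r ^ 4) s \<le> m ^ 3" .
        moreover have "s \<in> {-1/m..1/m}" using True2 by (auto simp: abs_le_iff)
        ultimately have e2: "indicator {-1/m..1/m} s = (1::real)" "\<bar>s\<bar> * poly (U r ^ 4) s \<le> m ^ 3" by auto
        have e1: "indicator {-1..1} s = (1::real)" using True by (auto simp: indicator_def abs_le_iff)
        show ?thesis unfolding g_def e1 e2(1) using g0 g0' e2(2) by linarith
      next
        case False2: False
        have s0: "s \<noteq> 0" using False2 m1 by auto
        have "(\<bar>s\<bar> * \<bar>poly (U r) s\<bar>) ^ 4 \<le> 1"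
          using U_abs_le2[OF True] by (intro power_le_one) auto
        then have "\<bar>s\<bar> ^ 3 * (\<bar>s\<bar> * poly (U r ^ 4) s) \<le> 1"
          unfolding P4 by (simp add: power_mult_distrib power_abs[symmetric] power_even_abs_numeral eval_nat_numeral algebra_simps)
        then have le: "\<bar>s\<bar> * poly (U r ^ 4) s \<le> 1 / \<bar>s\<bar> ^ 3"
          using s0 by (simp add: field_simps)
        show ?thesis
        proof (cases "0 < s")
          case True3: True
          have "s \<in> {1/m..1}" using True3 False2 True by auto
          moreover have "s \<notin> {-1..-1/m}"
          proof -
            have "-1/m < 0" using m1 by simp
            then have "\<not> s \<le> -1/m" using True3 by linarith
            then show ?thesis by simp
          qed
          moreover have "s \<notin> {-1/m..1/m}" using True3 False2 by auto
          ultimately have e: "indicator {1/m..1} s = (1::real)" "indicator {-1..-1/m} s = (0::real)"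
             "indicator {-1/m..1/m} s = (0::real)" by auto
          have e1: "indicator {-1..1} s = (1::real)" using True by (auto simp: indicator_def abs_le_iff)
          have "\<bar>s\<bar> = s" using True3 by simp
          then show ?thesis unfolding g_def e e1 using le by simp
        next
          case False3: False
          have "s \<in> {-1..-1/m}" using False3 False2 True by auto
          moreover have "s \<notin> {1/m..1}"
          proof -
            have "0 < 1/m" using m1 by simp
            then have "\<not> 1/m \<le> s" using False3 by linarith
            then show ?thesis by simp
          qed
          moreover have "s \<notin> {-1/m..1/m}" using False3 False2 by auto
          moreover have "1 / \<bar>s\<bar> ^ 3 = - 1 / s ^ 3" using False3 s0 by (simp add: abs_if)
          ultimately have e: "indicator {1/m..1} s = (0::real)" "indicator {-1..-1/m} s = (1::real)"
             "indicator {-1/m..1/m} s = (0::real)" "1 / \<bar>s\<bar> ^ 3 = - 1 / s ^ 3" by auto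
          have e1: "indicator {-1..1} s = (1::real)" using True by (auto simp: indicator_def abs_le_iff)
          show ?thesis unfolding g_def e(1-3) e1 using le e(4) by simp
        qed
      qed
    qed
  qed
  also have "(\<integral>s. g s \<partial>lborel) = (\<integral>s. indicator {-1/m..1/m} s * m ^ 3 \<partial>lborel)
      + (\<integral>s. indicator {1/m..1} s * (1 / s ^ 3) \<partial>lborel) + (\<integral>s. indicator {-1..-1/m} s * (- 1 / s ^ 3) \<partial>lborel)"
    unfolding g_def using i1 i2 i3 by simp
  also have "(\<integral>s. indicator {-1/m..1/m} s * m ^ 3 \<partial>lborel) = 2 * m ^ 2"
    using m1 by (simp add: field_simps eval_nat_numeral)
  also have "(\<integral>s. indicator {1/m..1} s * (1 / s ^ 3) \<partial>lborel) = (- 1 / (2 * 1 ^ 2)) - (- 1 / (2 * (1/m) ^ 2))"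
    using integral_FTC_atLeastAtMost[of "1/m" 1 "\<lambda>s::real. - 1 / (2 * s ^ 2)" "\<lambda>s. 1 / s ^ 3", OF _ d1 c1] m1
    by simp
  also have "(\<integral>s. indicator {-1..-1/m} s * (- 1 / s ^ 3) \<partial>lborel) = (1 / (2 * (-1/m) ^ 2)) - (1 / (2 * (-1) ^ 2))"
    using integral_FTC_atLeastAtMost[of "-1" "-1/m" "\<lambda>s::real. 1 / (2 * s ^ 2)" "\<lambda>s. - 1 / s ^ 3", OF _ d2 c2] m1
    by simp
  finally show ?thesis unfolding m_def[symmetric] using m1 by (simp add: field_simps power2_eq_square)
qed



lemma poly_K_nonneg: "0 \<le> poly (U r ^ 4) s"
  by (simp add: zero_le_even_power)

lemma conv_approx:
  fixes H :: "real \<Rightarrow> real" and L :: real and r :: nat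
  assumes L: "1 \<le> L" and lip: "\<And>a b. \<bar>H a - H b\<bar> \<le> \<bar>a - b\<bar>" and H0: "H 0 = 0"
  shows "\<exists>c. (\<forall>x\<in>{-L..L}. \<bar>H x - (\<Sum>i\<le>8*r. c i * x ^ i)\<bar> \<le> 8 * L * KA r / KN r)
           \<and> (\<forall>i\<in>{1..8*r}. \<bar>c i\<bar> \<le> (\<Sum>j\<le>8*r. \<bar>coeff (U r ^ 4) j\<bar>) / KN r)"
proof -
  define K where "K = U r ^ 4"
  define D where "D = 8 * r"
  define R where "R = 4 * L"
  define N where "N = KN r"
  have R0: "0 < R" using L unfolding R_def by simp
  have N0: "0 < N" unfolding N_def
    by (rule less_le_trans[OF _ KN_lower]) simp
  have degK: "degree K \<le> D"
    unfolding K_def D_def using degree_U[of r] degree_power_le[of "U r" 4] by linarith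
  have Kpoly: "poly K y = (\<Sum>j\<le>D. coeff K j * y ^ j)" for y
    unfolding poly_altdef using degK
    by (intro sum.mono_neutral_left) (auto simp: coeff_eq_0)
  have Kpos: "0 \<le> poly K s" for s unfolding K_def by (rule poly_K_nonneg)
  have Hcont: "continuous_on UNIV H"
    by (rule lipschitz_on_continuous_on[where L=1]) (auto simp: lipschitz_on_def dist_real_def lip)
  have Hcont': "continuous_on A H" for A using Hcont by (rule continuous_on_subset) simp
  have Hb: "\<bar>H u\<bar> \<le> \<bar>u\<bar>" for u using lip[of u 0] H0 by simp
  define J where "J i j = (\<integral>u. indicator {-2*L..2*L} u * (H u * (-u) ^ (j - i)) \<partial>lborel)" for i j :: nat
  define c where "c i = (1 / (N * R)) * (\<Sum>j\<le>D. coeff K j / R ^ j * of_nat (j choose i) * J i j)" for i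
  define P where "P x = (1 / (N * R)) * (\<integral>u. indicator {-2*L..2*L} u * (H u * poly K ((x - u) / R)) \<partial>lborel)" for x
  have intJ: "integrable lborel (\<lambda>u. indicator {-2*L..2*L} u * (H u * (-u) ^ l))" for l
    by (rule int_compact_real) (intro continuous_intros Hcont')
  have Pexp: "P x = (\<Sum>i\<le>D. c i * x ^ i)" for x
  proof -
    have pt: "indicator {-2*L..2*L} u * (H u * poly K ((x - u) / R)) =
      (\<Sum>i\<le>D. \<Sum>j\<le>D. (x ^ i * (coeff K j / R ^ j * of_nat (j choose i))) *
          (indicator {-2*L..2*L} u * (H u * (-u) ^ (j - i))))" for u
    proof -
      have "poly K ((x - u) / R) = (\<Sum>j\<le>D. coeff K j * ((x - u) / R) ^ j)" by (rule Kpoly)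
      also have "\<dots> = (\<Sum>j\<le>D. \<Sum>i\<le>D. coeff K j / R ^ j * (of_nat (j choose i) * x ^ i * (-u) ^ (j - i)))"
      proof (rule sum.cong[OF refl])
        fix j assume j: "j \<in> {..D}"
        have "(x - u) ^ j = (x + (-u)) ^ j" by simp
        also have "\<dots> = (\<Sum>i\<le>j. of_nat (j choose i) * x ^ i * (-u) ^ (j - i))" by (rule binomial_ring)
        also have "\<dots> = (\<Sum>i\<le>D. of_nat (j choose i) * x ^ i * (-u) ^ (j - i))"
          using j by (intro sum.mono_neutral_left) auto
        finally show "coeff K j * ((x - u) / R) ^ j =
            (\<Sum>i\<le>D. coeff K j / R ^ j * (of_nat (j choose i) * x ^ i * (-u) ^ (j - i)))"
          by (simp add: power_divide sum_distrib_left sum_divide_distrib)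
      qed
      also have "\<dots> = (\<Sum>i\<le>D. \<Sum>j\<le>D. coeff K j / R ^ j * (of_nat (j choose i) * x ^ i * (-u) ^ (j - i)))"
        by (rule sum.swap)
      finally show ?thesis by (simp add: sum_distrib_left mult_ac)
    qed
    have "(\<integral>u. indicator {-2*L..2*L} u * (H u * poly K ((x - u) / R)) \<partial>lborel) =
      (\<Sum>i\<le>D. \<Sum>j\<le>D. (x ^ i * (coeff K j / R ^ j * of_nat (j choose i))) * J i j)"
      unfolding pt J_def
    proof (subst Bochner_Integration.integral_sum)
      fix i assume "i \<in> {..D}"
      show "integrable lborel (\<lambda>u. \<Sum>j\<le>D. (x ^ i * (coeff K j / R ^ j * of_nat (j choose i))) *
          (indicator {-2*L..2*L} u * (H u * (-u) ^ (j - i))))"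
        by (intro Bochner_Integration.integrable_sum integrable_mult_right intJ)
    next
      show "(\<Sum>i\<le>D. LBINT u. \<Sum>j\<le>D. (x ^ i * (coeff K j / R ^ j * of_nat (j choose i))) *
          (indicator {-2*L..2*L} u * (H u * (-u) ^ (j - i)))) =
        (\<Sum>i\<le>D. \<Sum>j\<le>D. (x ^ i * (coeff K j / R ^ j * of_nat (j choose i))) *
          (LBINT u. indicator {-2*L..2*L} u * (H u * (-u) ^ (j - i))))"
      proof (rule sum.cong[OF refl])
        fix i assume "i \<in> {..D}"
        show "(LBINT u. \<Sum>j\<le>D. (x ^ i * (coeff K j / R ^ j * of_nat (j choose i))) *
          (indicator {-2*L..2*L} u * (H u * (-u) ^ (j - i)))) =
          (\<Sum>j\<le>D. (x ^ i * (coeff K j / R ^ j * of_nat (j choose i))) *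
          (LBINT u. indicator {-2*L..2*L} u * (H u * (-u) ^ (j - i))))"
          by (subst Bochner_Integration.integral_sum, intro integrable_mult_right intJ) simp
      qed
    qed
    then show ?thesis unfolding P_def c_def by (simp add: sum_distrib_left sum_distrib_right mult_ac)
  qed
  have Jb: "\<bar>J i j\<bar> \<le> 4 * L * (2 * L) ^ (j - i + 1)" for i j
  proof -
    have "\<bar>J i j\<bar> \<le> (\<integral>u. indicator {-2*L..2*L} u * (2 * L) ^ (j - i + 1) \<partial>lborel)"
      unfolding J_def
    proof (rule integral_abs_bound_integral[OF intJ])
      show "integrable lborel (\<lambda>u. indicator {-2*L..2*L} u * (2 * L) ^ (j - i + 1))"
        using L by (intro integrable_mult_left integrable_real_indicator) auto
      fix u :: real
      show "\<bar>indicator {-2*L..2*L} u * (H u * (-u) ^ (j - i))\<bar> \<le> indicator {-2*L..2*L} u * (2 * L) ^ (j - i + 1)"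
      proof (cases "u \<in> {-2*L..2*L}")
        case True
        then have u: "\<bar>u\<bar> \<le> 2 * L" by auto
        have "\<bar>H u * (-u) ^ (j - i)\<bar> = \<bar>H u\<bar> * \<bar>u\<bar> ^ (j - i)" by (simp add: abs_mult power_abs)
        also have "\<dots> \<le> (2 * L) * (2 * L) ^ (j - i)"
          using Hb[of u] u by (intro mult_mono power_mono) auto
        finally show ?thesis using True by simp
      qed simp
    qed
    also have "\<dots> = 4 * L * (2 * L) ^ (j - i + 1)" using L by simp
    finally show ?thesis .
  qed
  have cb: "\<bar>c i\<bar> \<le> (\<Sum>j\<le>D. \<bar>coeff K j\<bar>) / N" if i: "1 \<le> i" for i
  proof -
    have tmb: "\<bar>coeff K j / R ^ j * of_nat (j choose i) * J i j\<bar> \<le> \<bar>coeff K j\<bar> * R" for j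
    proof (cases "i \<le> j")
      case False
      then have "j < i" by simp
      then show ?thesis using R0 by (simp add: binomial_eq_0)
    next
      case True
      have "of_nat (j choose i) * \<bar>J i j\<bar> \<le> 2 ^ j * (4 * L * (2 * L) ^ (j - i + 1))"
        using Jb[of i j] by (intro mult_mono) (auto simp: binomial_le_pow2)
      also have "\<dots> \<le> 2 ^ j * (4 * L * (2 * L) ^ j)"
        using L True i by (intro mult_left_mono power_increasing) auto
      also have "\<dots> = (4 * L) * (2 ^ j * (2 * L) ^ j)" by (simp add: ac_simps)
      also have "2 ^ j * (2 * L) ^ j = (4 * L) ^ j" by (subst power_mult_distrib[symmetric]) simp
      also have "(4 * L) * (4 * L) ^ j = R ^ j * R" unfolding R_def by (simp add: mult.commute)
      finally have "of_nat (j choose i) * \<bar>J i j\<bar> \<le> R ^ j * R" .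
      then have "\<bar>coeff K j\<bar> / R ^ j * (of_nat (j choose i) * \<bar>J i j\<bar>) \<le> \<bar>coeff K j\<bar> / R ^ j * (R ^ j * R)"
        by (intro mult_left_mono) (use R0 in auto)
      also have "\<dots> = \<bar>coeff K j\<bar> * R" using R0 by simp
      finally show ?thesis using R0 by (simp add: abs_mult mult_ac)
    qed
    have "\<bar>c i\<bar> = (1 / (N * R)) * \<bar>\<Sum>j\<le>D. coeff K j / R ^ j * of_nat (j choose i) * J i j\<bar>"
      unfolding c_def using N0 R0 by (simp add: abs_mult)
    also have "\<dots> \<le> (1 / (N * R)) * (\<Sum>j\<le>D. \<bar>coeff K j\<bar> * R)"
      using N0 R0 by (intro mult_left_mono order_trans[OF sum_abs] sum_mono tmb) auto
    also have "\<dots> = (\<Sum>j\<le>D. \<bar>coeff K j\<bar>) / N"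
      using N0 R0 by (simp add: sum_distrib_right[symmetric])
    finally show ?thesis .
  qed
  have err: "\<bar>H x - P x\<bar> \<le> 8 * L * KA r / N" if x: "x \<in> {-L..L}" for x
  proof -
    define f1 where "f1 s = indicator {-2*L..2*L} (x - R * s) * (H (x - R * s) * poly K s)" for s
    define f2 where "f2 s = indicator {-1..1} s * (H x * poly K s)" for s
    have ind_eq: "indicator {-2*L..2*L} (x - R * s) = (indicator {(x - 2*L)/R..(x + 2*L)/R} s :: real)" for s
      using R0 by (auto simp: indicator_def field_simps)
    have i1: "integrable lborel f1"
      unfolding f1_def ind_eq
      by (rule int_compact_real) (intro continuous_intros continuous_on_compose2[OF Hcont] ; auto)
    have i2: "integrable lborel f2"
      unfolding f2_def using KN_integrable[of r] unfolding K_def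
      by (rule_tac Bochner_Integration.integrable_cong[THEN iffD1, OF refl _ integrable_mult_right[where c="H x"]])
         (auto simp: mult_ac)
    have "(\<integral>u. indicator {-2*L..2*L} u * (H u * poly K ((x - u) / R)) \<partial>lborel)
        = \<bar>- R\<bar> *\<^sub>R (\<integral>s. indicator {-2*L..2*L} (x + (- R) * s) * (H (x + (- R) * s) * poly K ((x - (x + (- R) * s)) / R)) \<partial>lborel)"
      using R0 by (intro lborel_integral_real_affine) simp
    also have "\<dots> = R * (\<integral>s. f1 s \<partial>lborel)"
      using R0 unfolding f1_def by simp
    finally have P1: "P x = (1 / N) * (\<integral>s. f1 s \<partial>lborel)"
      unfolding P_def using R0 by simp
    have P2: "H x = (1 / N) * (\<integral>s. f2 s \<partial>lborel)"
    proof -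
      have "(\<integral>s. f2 s \<partial>lborel) = H x * N"
        unfolding f2_def N_def KN_def K_def
        by (subst Bochner_Integration.integral_mult_right_zero[symmetric]) (simp add: mult_ac)
      then show ?thesis using N0 by simp
    qed
    have "\<bar>H x - P x\<bar> = (1 / N) * \<bar>\<integral>s. f1 s - f2 s \<partial>lborel\<bar>"
      unfolding P1 P2 using N0 i1 i2 by (simp add: abs_minus_commute diff_divide_distrib[symmetric])
    also have "\<bar>\<integral>s. f1 s - f2 s \<partial>lborel\<bar> \<le> (\<integral>s. 8 * L * (indicator {-1..1} s * (\<bar>s\<bar> * poly K s)) \<partial>lborel)"
    proof (rule integral_abs_bound_integral)
      show "integrable lborel (\<lambda>s. f1 s - f2 s)" using i1 i2 by simp
      show "integrable lborel (\<lambda>s. 8 * L * (indicator {-1..1} s * (\<bar>s\<bar> * poly K s)))"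
        using KA_integrable[of r] unfolding K_def by simp
      fix s :: real
      show "\<bar>f1 s - f2 s\<bar> \<le> 8 * L * (indicator {-1..1} s * (\<bar>s\<bar> * poly K s))"
      proof (cases "x - R * s \<in> {-2*L..2*L}")
        case True
        have "\<bar>R * s\<bar> \<le> 3 * L" using True x by (auto simp: abs_le_iff)
        then have "\<bar>s\<bar> \<le> 3/4" using R0 unfolding R_def by (simp add: abs_mult field_simps)
        then have s1: "s \<in> {-1..1}" by (auto simp: abs_le_iff)
        have "\<bar>f1 s - f2 s\<bar> = \<bar>H (x - R * s) - H x\<bar> * poly K s"
          unfolding f1_def f2_def using True s1 Kpos[of s] by (simp add: abs_mult left_diff_distrib[symmetric])
        also have "\<dots> \<le> (R * \<bar>s\<bar>) * poly K s"
          using lip[of "x - R * s" x] R0 Kpos[of s] by (intro mult_right_mono) (auto simp: abs_mult)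
        also have "\<dots> \<le> (8 * L * \<bar>s\<bar>) * poly K s"
          using L Kpos[of s] unfolding R_def by (intro mult_right_mono) auto
        finally show ?thesis using s1 by simp
      next
        case False
        then have "\<bar>R * s\<bar> > L" using x by (auto simp: abs_le_iff)
        then have s4: "1 \<le> 4 * \<bar>s\<bar>" using R0 unfolding R_def by (simp add: abs_mult field_simps)
        have "\<bar>f1 s - f2 s\<bar> = indicator {-1..1} s * (\<bar>H x\<bar> * poly K s)"
          unfolding f1_def f2_def using False Kpos[of s] by (simp add: abs_mult)
        also have "\<dots> \<le> indicator {-1..1} s * ((L * (4 * \<bar>s\<bar>)) * poly K s)"
        proof -
          have "\<bar>H x\<bar> \<le> L" using Hb[of x] x by auto
          also have "\<dots> \<le> L * (4 * \<bar>s\<bar>)" using s4 L by simp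
          finally show ?thesis using Kpos[of s] by (intro mult_left_mono mult_right_mono) auto
        qed
        also have "\<dots> \<le> 8 * L * (indicator {-1..1} s * (\<bar>s\<bar> * poly K s))"
          using L Kpos[of s] by (simp add: indicator_def mult_ac mult_right_mono)
        finally show ?thesis .
      qed
    qed
    also have "(\<integral>s. 8 * L * (indicator {-1..1} s * (\<bar>s\<bar> * poly K s)) \<partial>lborel) = 8 * L * KA r"
      unfolding KA_def K_def by simp
    finally show ?thesis using N0 by (simp add: divide_right_mono mult_left_mono field_simps)
  qed
  show ?thesis
  proof (intro exI conjI ballI)
    fix x :: real assume "x \<in> {-L..L}"
    then show "\<bar>H x - (\<Sum>i\<le>8*r. c i * x ^ i)\<bar> \<le> 8 * L * KA r / KN r"
      using err[of x] Pexp[of x] unfolding D_def N_def by simp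
  next
    fix i assume "i \<in> {1..8*r}"
    then show "\<bar>c i\<bar> \<le> (\<Sum>j\<le>8*r. \<bar>coeff (U r ^ 4) j\<bar>) / KN r"
      using cb[of i] unfolding D_def N_def K_def by simp
  qed
qed



lemma int_diff_bound:
  fixes M :: "real measure" and f g :: "real \<Rightarrow> real"
  assumes M: "prob_space M" and f: "integrable M f" and g: "integrable M g"
    and ae: "AE x in M. \<bar>f x - g x\<bar> \<le> e"
  shows "\<bar>(\<integral>x. f x \<partial>M) - (\<integral>x. g x \<partial>M)\<bar> \<le> e"
proof -
  interpret prob_space M by fact
  have "\<bar>(\<integral>x. f x \<partial>M) - (\<integral>x. g x \<partial>M)\<bar> = \<bar>\<integral>x. f x - g x \<partial>M\<bar>" using f g by simp
  also have "\<dots> \<le> (\<integral>x. \<bar>f x - g x\<bar> \<partial>M)" using integral_abs_bound[of M "\<lambda>x. f x - g x"] by simp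
  also have "\<dots> \<le> (\<integral>x. e \<partial>M)"
    by (rule integral_mono_AE) (use f g ae in auto)
  also have "\<dots> = e" by (simp add: prob_space)
  finally show ?thesis .
qed

lemma int_pow:
  assumes M: "prob_space M" and sM: "sets M = sets borel" and ae: "AE x in M. x \<in> {-L..L}"
  shows "integrable M (\<lambda>x::real. x ^ i)"
proof -
  interpret prob_space M by fact
  show ?thesis
  proof (rule integrable_const_bound[where B="L ^ i"])
    show "AE x in M. norm (x ^ i) \<le> L ^ i"
      by (rule eventually_mono[OF ae]) (auto simp: power_abs intro!: power_mono)
    show "(\<lambda>x::real. x ^ i) \<in> borel_measurable M"
      by (subst measurable_cong_sets[OF sM refl]) simp
  qed
qed

lemma main_bound:
  fixes \<mu> \<nu> :: "real measure" and L c :: real and k :: nat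
  assumes \<mu>: "prob_space \<mu>" "sets \<mu> = sets borel" and \<nu>: "prob_space \<nu>" "sets \<nu> = sets borel"
    and L: "1 \<le> L" and ae\<mu>: "AE x in \<mu>. x \<in> {-L..L}" and ae\<nu>: "AE x in \<nu>. x \<in> {-L..L}"
    and c: "0 < c" "W1 \<mu> \<nu> = ennreal c" and k: "2 * L * 49152 / c \<le> real k"
  shows "c / (2 * 153664 * 3 ^ k) \<le> Mom k \<mu> \<nu>"
proof -
  interpret P\<mu>: prob_space \<mu> by fact
  interpret P\<nu>: prob_space \<nu> by fact
  have rd\<mu>: "real_distribution \<mu>" using \<mu> by (simp add: real_distribution_def real_distribution_axioms_def)
  have rd\<nu>: "real_distribution \<nu>" using \<nu> by (simp add: real_distribution_def real_distribution_axioms_def)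
  obtain G where Glip: "\<And>a b. \<bar>G a - G b\<bar> \<le> \<bar>a - b\<bar>"
    and W: "W1 \<mu> \<nu> \<le> ennreal ((\<integral>x. G x \<partial>\<mu>) - (\<integral>x. G x \<partial>\<nu>))"
    using W1_bound[OF rd\<mu> rd\<nu> _ ae\<mu> ae\<nu>] L by auto
  define H where "H x = G x - G 0" for x
  have Hlip: "\<bar>H a - H b\<bar> \<le> \<bar>a - b\<bar>" for a b unfolding H_def using Glip[of a b] by simp
  have H0: "H 0 = 0" unfolding H_def by simp
  have Hb: "\<bar>H x\<bar> \<le> \<bar>x\<bar>" for x using Hlip[of x 0] H0 by simp
  have Hcont: "continuous_on UNIV H"
    by (rule lipschitz_on_continuous_on[where L=1]) (auto simp: lipschitz_on_def dist_real_def Hlip)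
  have Hm: "H \<in> borel_measurable borel" using Hcont by (rule borel_measurable_continuous_onI)
  have HL: "\<bar>H x\<bar> \<le> L" if "x \<in> {-L..L}" for x
    by (rule order_trans[OF Hb]) (use that in auto)
  have intH: "integrable M H" if M: "prob_space M" "sets M = sets borel" and ae: "AE x in M. x \<in> {-L..L}" for M
  proof -
    interpret prob_space M by fact
    show ?thesis
    proof (rule integrable_const_bound[where B=L])
      show "AE x in M. norm (H x) \<le> L"
        by (rule eventually_mono[OF ae]) (simp add: HL)
      show "H \<in> borel_measurable M"
        using Hm by (subst measurable_cong_sets[OF M(2) refl])
    qed
  qed
  have intH\<mu>: "integrable \<mu> H" by (rule intH[OF \<mu> ae\<mu>])
  have intH\<nu>: "integrable \<nu> H" by (rule intH[OF \<nu> ae\<nu>])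
  have iG\<mu>: "(\<integral>x. G x \<partial>\<mu>) = (\<integral>x. H x \<partial>\<mu>) + G 0"
  proof -
    have "(\<integral>x. G x \<partial>\<mu>) = (\<integral>x. H x + G 0 \<partial>\<mu>)" by (simp add: H_def)
    also have "\<dots> = (\<integral>x. H x \<partial>\<mu>) + G 0"
      by (subst Bochner_Integration.integral_add[OF intH\<mu>]) (auto simp: P\<mu>.prob_space)
    finally show ?thesis .
  qed
  have iG\<nu>: "(\<integral>x. G x \<partial>\<nu>) = (\<integral>x. H x \<partial>\<nu>) + G 0"
  proof -
    have "(\<integral>x. G x \<partial>\<nu>) = (\<integral>x. H x + G 0 \<partial>\<nu>)" by (simp add: H_def)
    also have "\<dots> = (\<integral>x. H x \<partial>\<nu>) + G 0"
      by (subst Bochner_Integration.integral_add[OF intH\<nu>]) (auto simp: P\<nu>.prob_space)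
    finally show ?thesis .
  qed
  define \<Delta> where "\<Delta> = (\<integral>x. H x \<partial>\<mu>) - (\<integral>x. H x \<partial>\<nu>)"
  have "ennreal c \<le> ennreal \<Delta>" using W c(2) iG\<mu> iG\<nu> unfolding \<Delta>_def by simp
  then have c\<Delta>: "c \<le> \<Delta>" using c(1) by (auto simp: ennreal_le_iff2)
  have b\<mu>: "\<bar>(\<integral>x. H x \<partial>\<mu>) - (\<integral>x. 0 \<partial>\<mu>)\<bar> \<le> L"
    by (rule int_diff_bound[OF \<mu>(1) intH\<mu>]) (auto intro!: eventually_mono[OF ae\<mu>] HL)
  have b\<nu>: "\<bar>(\<integral>x. H x \<partial>\<nu>) - (\<integral>x. 0 \<partial>\<nu>)\<bar> \<le> L"
    by (rule int_diff_bound[OF \<nu>(1) intH\<nu>]) (auto intro!: eventually_mono[OF ae\<nu>] HL)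
  have \<Delta>2L: "\<Delta> \<le> 2 * L" using b\<mu> b\<nu> unfolding \<Delta>_def by simp
  have c2L: "c \<le> 2 * L" using c\<Delta> \<Delta>2L by simp
  define r where "r = k div 16"
  define D where "D = 8 * r"
  define m where "m = real (2 * r + 1)"
  have m1: "1 \<le> m" unfolding m_def by simp
  have DK: "D \<le> k" unfolding D_def r_def by simp
  have km: "real k / 16 \<le> m"
  proof -
    have "k = 16 * (k div 16) + k mod 16" by simp
    moreover have "k mod 16 < 16" by simp
    have "k < 16 * (2 * r + 1)" unfolding r_def by presburger
    then have "real k < 16 * m" unfolding m_def by (metis of_nat_less_iff of_nat_mult of_nat_numeral)
    then show ?thesis by simp
  qed
  obtain cc where err0: "\<forall>x\<in>{-L..L}. \<bar>H x - (\<Sum>i\<le>8*r. cc i * x ^ i)\<bar> \<le> 8 * L * KA r / KN r"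
    and cb0: "\<forall>i\<in>{1..8*r}. \<bar>cc i\<bar> \<le> (\<Sum>j\<le>8*r. \<bar>coeff (U r ^ 4) j\<bar>) / KN r"
    using conv_approx[OF L Hlip H0, of r] by blast
  have KN0: "m ^ 3 / 64 \<le> KN r" using KN_lower[of r] unfolding m_def .
  have KNpos: "0 < KN r" using KN0 m1 by (smt (verit) one_le_power zero_less_divide_iff)
  define e where "e = 1536 * L / m"
  have err1: "8 * L * KA r / KN r \<le> e"
  proof -
    have "8 * L * KA r / KN r \<le> (8 * L * (3 * m ^ 2)) / (m ^ 3 / 64)"
      using KA_upper[of r] KN0 L m1 unfolding m_def[symmetric]
      by (intro frac_le) auto
    also have "\<dots> = e" unfolding e_def using m1 by (simp add: field_simps eval_nat_numeral)
    finally show ?thesis .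
  qed
  have e_le: "2 * e \<le> c / 2"
  proof -
    have "2 * L * 49152 / c \<le> 16 * m" using k km by simp
    then have "2 * L * 49152 \<le> 16 * m * c" using c(1) by (simp add: divide_le_eq)
    then have "6144 * L \<le> c * m" by (simp add: mult.commute)
    then show ?thesis unfolding e_def using m1 c(1) by (simp add: field_simps)
  qed
  define P where "P x = (\<Sum>i\<le>D. cc i * x ^ i)" for x
  have intP: "integrable M P" if M: "prob_space M" "sets M = sets borel" and ae: "AE x in M. x \<in> {-L..L}" for M
    unfolding P_def by (intro Bochner_Integration.integrable_sum integrable_mult_right int_pow[OF M ae])
  have intPe: "(\<integral>x. P x \<partial>M) = (\<Sum>i\<le>D. cc i * (\<integral>x. x ^ i \<partial>M))"
    if M: "prob_space M" "sets M = sets borel" and ae: "AE x in M. x \<in> {-L..L}" for M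
    unfolding P_def
    by (subst Bochner_Integration.integral_sum) (auto intro!: integrable_mult_right int_pow[OF M ae])
  have HP: "\<bar>(\<integral>x. H x \<partial>M) - (\<integral>x. P x \<partial>M)\<bar> \<le> e"
    if M: "prob_space M" "sets M = sets borel" and ae: "AE x in M. x \<in> {-L..L}" for M
  proof (rule int_diff_bound[OF M(1) intH[OF M ae] intP[OF M ae]])
    show "AE x in M. \<bar>H x - P x\<bar> \<le> e"
    proof (rule eventually_mono[OF ae])
      fix x assume x: "x \<in> {-L..L}"
      have "\<bar>H x - P x\<bar> \<le> 8 * L * KA r / KN r" using err0 x unfolding P_def D_def by blast
      then show "\<bar>H x - P x\<bar> \<le> e" using err1 by linarith
    qed
  qed
  define dm where "dm i = (\<integral>x. x ^ i \<partial>\<mu>) - (\<integral>x. x ^ i \<partial>\<nu>)" for i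
  have PP: "(\<integral>x. P x \<partial>\<mu>) - (\<integral>x. P x \<partial>\<nu>) = (\<Sum>i\<le>D. cc i * dm i)"
    unfolding intPe[OF \<mu> ae\<mu>] intPe[OF \<nu> ae\<nu>] dm_def
    by (simp add: sum_subtractf right_diff_distrib)
  also have "\<dots> = cc 0 * dm 0 + (\<Sum>i=1..D. cc i * dm i)"
    by (simp add: atMost_atLeast0 sum.atLeast_Suc_atMost)
  also have "dm 0 = 0" unfolding dm_def by (simp add: P\<mu>.prob_space P\<nu>.prob_space)
  finally have PP2: "(\<integral>x. P x \<partial>\<mu>) - (\<integral>x. P x \<partial>\<nu>) = (\<Sum>i=1..D. cc i * dm i)" by simp
  define Bc :: real where "Bc = 153664 * 9 ^ (4 * r)"
  have Sb: "(\<Sum>j\<le>8*r. \<bar>coeff (U r ^ 4) j\<bar>) \<le> 2401 * 9 ^ (4 * r)"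
  proof -
    have "(\<Sum>j\<le>8*r. \<bar>coeff (U r ^ 4) j\<bar>) \<le> poly (V r ^ 4) 1"
      by (rule sum_coeff_maj[OF maj_pow[OF maj_UV]])
    also have "\<dots> = (poly (V r) 1) ^ 4" by simp
    also have "\<dots> \<le> (7 * 9 ^ r) ^ 4" using V_bound[of r] by (intro power_mono) auto
    also have "\<dots> = 2401 * 9 ^ (4 * r)" by (simp add: power_mult_distrib power_mult[symmetric] mult.commute)
    finally show ?thesis .
  qed
  have cb: "\<bar>cc i\<bar> \<le> Bc" if i: "i \<in> {1..D}" for i
  proof -
    have "\<bar>cc i\<bar> \<le> (\<Sum>j\<le>8*r. \<bar>coeff (U r ^ 4) j\<bar>) / KN r" using cb0 i unfolding D_def by auto
    also have "\<dots> \<le> (2401 * 9 ^ (4 * r)) / (m ^ 3 / 64)"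
      using Sb KN0 m1 by (intro frac_le) auto
    also have "\<dots> \<le> (2401 * 9 ^ (4 * r)) / (1 / 64)"
      using m1 by (intro divide_left_mono) (auto simp: one_le_power)
    also have "\<dots> = Bc" unfolding Bc_def by simp
    finally show ?thesis .
  qed
  have dmb: "\<bar>dm i\<bar> \<le> Mom k \<mu> \<nu>" if i: "i \<in> {1..k}" for i
  proof -
    have "\<bar>dm i\<bar> = sqrt ((dm i)\<^sup>2)" by simp
    also have "\<dots> \<le> sqrt (\<Sum>i=1..k. (dm i)\<^sup>2)"
      using i by (intro real_sqrt_le_mono member_le_sum) auto
    also have "\<dots> = Mom k \<mu> \<nu>" unfolding Mom_def dm_def ..
    finally show ?thesis .
  qed
  have Mom0: "0 \<le> Mom k \<mu> \<nu>" unfolding Mom_def by (simp add: sum_nonneg)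
  have "(\<Sum>i=1..D. cc i * dm i) \<le> (\<Sum>i=1..D. Bc * Mom k \<mu> \<nu>)"
  proof (rule sum_mono)
    fix i assume i: "i \<in> {1..D}"
    have "cc i * dm i \<le> \<bar>cc i\<bar> * \<bar>dm i\<bar>" by (simp add: abs_mult[symmetric])
    also have "\<dots> \<le> Bc * Mom k \<mu> \<nu>"
      using cb[OF i] dmb[of i] i DK by (intro mult_mono) auto
    finally show "cc i * dm i \<le> Bc * Mom k \<mu> \<nu>" .
  qed
  also have "\<dots> = real D * Bc * Mom k \<mu> \<nu>" by simp
  also have "\<dots> \<le> 153664 * 3 ^ k * Mom k \<mu> \<nu>"
  proof (rule mult_right_mono[OF _ Mom0])
    have "real D \<le> 3 ^ D"
    proof -
      have "D < 2 ^ D" by simp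
      also have "(2::nat) ^ D \<le> 3 ^ D" by (intro power_mono) auto
      finally show ?thesis by (metis less_imp_le of_nat_less_iff of_nat_numeral of_nat_power)
    qed
    moreover have "(9::real) ^ (4 * r) = 3 ^ D"
    proof -
      have "(9::real) ^ (4 * r) = (3 ^ 2) ^ (4 * r)" by simp
      also have "\<dots> = 3 ^ (2 * (4 * r))" by (rule power_mult[symmetric])
      also have "\<dots> = 3 ^ D" unfolding D_def by simp
      finally show ?thesis .
    qed
    ultimately have "real D * 9 ^ (4 * r) \<le> 3 ^ D * 3 ^ D"
      by (simp add: mult_right_mono)
    also have "\<dots> = 3 ^ (16 * r)" unfolding D_def by (simp add: power_add[symmetric])
    also have "\<dots> \<le> 3 ^ k" unfolding r_def by (intro power_increasing) auto
    finally show "real D * Bc \<le> 153664 * 3 ^ k" unfolding Bc_def by simp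
  qed
  finally have sumb: "(\<Sum>i=1..D. cc i * dm i) \<le> 153664 * 3 ^ k * Mom k \<mu> \<nu>" .
  have "c \<le> \<Delta>" by (fact c\<Delta>)
  also have "\<Delta> \<le> 2 * e + ((\<integral>x. P x \<partial>\<mu>) - (\<integral>x. P x \<partial>\<nu>))"
    using HP[OF \<mu> ae\<mu>] HP[OF \<nu> ae\<nu>] unfolding \<Delta>_def by linarith
  also have "\<dots> \<le> c / 2 + 153664 * 3 ^ k * Mom k \<mu> \<nu>"
    unfolding PP2 using e_le sumb by linarith
  finally have "c / 2 \<le> 153664 * 3 ^ k * Mom k \<mu> \<nu>" by simp
  then show ?thesis by (simp add: field_simps)
qed

theorem corollary9p9:
  "\<exists>C C' :: real. C > 0 \<and> C' > 0 \<and>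
    (\<forall>(\<mu> :: real measure) (\<nu> :: real measure) (L :: real) (c :: real) (k :: nat).
       prob_space \<mu> \<longrightarrow> prob_space \<nu> \<longrightarrow>
       sets \<mu> = sets borel \<longrightarrow> sets \<nu> = sets borel \<longrightarrow>
       L \<ge> 1 \<longrightarrow>
       (AE x in \<mu>. x \<in> {-L..L}) \<longrightarrow> (AE x in \<nu>. x \<in> {-L..L}) \<longrightarrow>
       c > 0 \<longrightarrow> W1 \<mu> \<nu> = ennreal c \<longrightarrow>
       int k \<ge> \<lceil>2 * L * C / c\<rceil> \<longrightarrow>
       Mom k \<mu> \<nu> \<ge> c / (2 * C' * 3 ^ k))"
proof (rule exI[where x=49152], rule exI[where x=153664], intro conjI allI impI)
  fix \<mu> \<nu> :: "real measure" and L c :: real and k :: nat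
  assume "prob_space \<mu>" "prob_space \<nu>" "sets \<mu> = sets borel" "sets \<nu> = sets borel" "1 \<le> L"
    "AE x in \<mu>. x \<in> {-L..L}" "AE x in \<nu>. x \<in> {-L..L}" "0 < c" "W1 \<mu> \<nu> = ennreal c"
    and k: "\<lceil>2 * L * 49152 / c\<rceil> \<le> int k"
  moreover have "2 * L * 49152 / c \<le> real k" using k by (simp add: ceiling_le_iff)
  ultimately show "c / (2 * 153664 * 3 ^ k) \<le> Mom k \<mu> \<nu>"
    by (intro main_bound) auto
qed simp_all

end
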